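(* Let $m,n\ge1$, $N=2^m$, $D=2^{m+2}$, and fix $\mathbf x=(x_1,\dots,x_n)\in\{0,\dots,N-1\}^n$. Let $\mathbf y=(y_1,\dots,y_n)$, $v$ and $v_1,\dots,v_{n-1}$ be independent and uniformly distributed on $\{0,\dots,N-1\}$ (each coordinate), and put $v_n=\big(4v-4\sum_{i=1}^{n-1}v_i \bmod D\big)/4\in\{0,\dots,N-1\}$ (i.e. $v_n\equiv v-\sum_{i<n}v_i\pmod N$). For $i=1,\dots,n$ let $p_i=2x_i+1$, $q_i=2y_i+1$, $s_i=4v_i-2y_i-1\bmod D$ and $M_i=s_i+p_iq_i\bmod D$. Let $M=(M_1,\dots,M_n)$, $X_B=(\mathbf y,v)$ and $u=\sum_{i=1}^n x_iy_i+v\bmod N$. Then the conditional mutual information satisfies $H(M:X_B\mid u)=0$.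
   Context: $H(\cdot:\cdot\mid\cdot)$ is the Shannon conditional mutual information. This models a semi-honest Alice (with input $\mathbf x$) who learns all values $M_i$ in the scalar-product protocol, and $X_B$ is Bob's private input; the conclusion says she learns nothing about $X_B$ beyond the intended output $u$. *)

theory Defs
  imports "HOL-Probability.Probability"
begin

text \<open>Sample space of Bob's randomness: \<open>(y, v, w)\<close> with \<open>y = (y_1..y_n)\<close>, \<open>v\<close>,
  and \<open>w = (v_1..v_{n-1})\<close>, all coordinates in \<open>{0..N-1}\<close>, \<open>N = 2^m\<close>.\<close>
definition sp_space :: "nat \<Rightarrow> nat \<Rightarrow> ((nat \<Rightarrow> int) \<times> int \<times> (nat \<Rightarrow> int)) set" where
  "sp_space m n = ({1..n} \<rightarrow>\<^sub>E {0..<2^m}) \<times> {0..<2^m} \<times> ({1..<n} \<rightarrow>\<^sub>E {0..<2^m})"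

definition sp_share :: "nat \<Rightarrow> nat \<Rightarrow> (nat \<Rightarrow> int) \<times> int \<times> (nat \<Rightarrow> int) \<Rightarrow> nat \<Rightarrow> int" where
  "sp_share m n \<omega> i = (case \<omega> of (y, v, w) \<Rightarrow>
     if i < n then w i else ((4 * v - 4 * (\<Sum>j\<in>{1..<n}. w j)) mod 2^(m+2)) div 4)"

definition sp_msgs :: "nat \<Rightarrow> nat \<Rightarrow> (nat \<Rightarrow> int) \<Rightarrow> (nat \<Rightarrow> int) \<times> int \<times> (nat \<Rightarrow> int) \<Rightarrow> (nat \<Rightarrow> int)" where
  "sp_msgs m n x \<omega> = (case \<omega> of (y, v, w) \<Rightarrow>
     (\<lambda>i\<in>{1..n}. ((4 * sp_share m n \<omega> i - 2 * y i - 1) mod 2^(m+2)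
                    + (2 * x i + 1) * (2 * y i + 1)) mod 2^(m+2)))"

definition sp_bob :: "(nat \<Rightarrow> int) \<times> int \<times> (nat \<Rightarrow> int) \<Rightarrow> (nat \<Rightarrow> int) \<times> int" where
  "sp_bob \<omega> = (case \<omega> of (y, v, w) \<Rightarrow> (y, v))"

definition sp_out :: "nat \<Rightarrow> nat \<Rightarrow> (nat \<Rightarrow> int) \<Rightarrow> (nat \<Rightarrow> int) \<times> int \<times> (nat \<Rightarrow> int) \<Rightarrow> int" where
  "sp_out m n x \<omega> = (case \<omega> of (y, v, w) \<Rightarrow> ((\<Sum>i=1..n. x i * y i) + v) mod 2^m)"

end

theory Submission
  imports Defs
begin

lemma cmi_zero_gen:
  fixes \<Omega> :: "'a set" and X :: "'a \<Rightarrow> 'b" and Y :: "'a \<Rightarrow> 'c" and Z :: "'a \<Rightarrow> 'd"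
    and h :: "'b \<Rightarrow> 'd \<Rightarrow> real"
  assumes fin: "finite \<Omega>" and ne: "\<Omega> \<noteq> {}"
  and Zf: "\<And>\<omega> \<omega>'. \<omega>\<in>\<Omega> \<Longrightarrow> \<omega>'\<in>\<Omega> \<Longrightarrow> Y \<omega> = Y \<omega>' \<Longrightarrow> Z \<omega> = Z \<omega>'"
  and H: "\<And>a \<omega>. \<omega>\<in>\<Omega> \<Longrightarrow> real (card {\<omega>'\<in>\<Omega>. X \<omega>' = a \<and> Y \<omega>' = Y \<omega>})
              = h a (Z \<omega>) * real (card {\<omega>'\<in>\<Omega>. Y \<omega>' = Y \<omega>})"
  shows "prob_space.conditional_mutual_information (uniform_count_measure \<Omega>) 2
     (count_space (X`\<Omega>)) (count_space (Y`\<Omega>)) (count_space (Z`\<Omega>)) X Y Z = 0"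
proof -
  let ?M = "uniform_count_measure \<Omega>"
  interpret information_space ?M 2
    by (rule information_space.intro[OF prob_space_uniform_count_measure[OF fin ne]]) (unfold_locales, simp)
  have sp: "space ?M = \<Omega>" by (simp add: space_uniform_count_measure)
  have sf: "simple_function ?M f" for f :: "'a \<Rightarrow> 'e"
    unfolding simple_function_def using fin by (auto simp: sp sets_uniform_count_measure)
  have meas: "measure ?M (f -` {z} \<inter> space ?M) = real (card {\<omega>\<in>\<Omega>. f \<omega> = z}) / real (card \<Omega>)"
    for f :: "'a \<Rightarrow> 'e" and z
  proof -
    have "f -` {z} \<inter> space ?M = {\<omega>\<in>\<Omega>. f \<omega> = z}" by (auto simp: sp)
    thus ?thesis using fin by (simp add: measure_uniform_count_measure)
  qed
  define C where "C P = real (card {\<omega>\<in>\<Omega>. P \<omega>})" for P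
  have sd: "simple_distributed ?M f (\<lambda>z. C (\<lambda>\<omega>. f \<omega> = z) / real (card \<Omega>))" for f :: "'a \<Rightarrow> 'e"
    by (rule simple_distributedI[OF sf]) (auto simp: meas C_def)
  have eq: "conditional_mutual_information 2 (count_space (X`\<Omega>)) (count_space (Y`\<Omega>)) (count_space (Z`\<Omega>)) X Y Z = (\<Sum>(x, y, z)\<in>(\<lambda>x. (X x, Y x, Z x))`\<Omega>.
      (C (\<lambda>\<omega>. (X \<omega>, Y \<omega>, Z \<omega>) = (x,y,z)) / real (card \<Omega>)) *
       log 2 ((C (\<lambda>\<omega>. (X \<omega>, Y \<omega>, Z \<omega>) = (x,y,z)) / real (card \<Omega>)) /
        ((C (\<lambda>\<omega>. (X \<omega>, Z \<omega>) = (x,z)) / real (card \<Omega>)) *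
          ((C (\<lambda>\<omega>. (Y \<omega>, Z \<omega>) = (y,z)) / real (card \<Omega>)) / (C (\<lambda>\<omega>. Z \<omega> = z) / real (card \<Omega>))))))"
    using conditional_mutual_information_eq[OF sd sd sd sd] unfolding sp .
  have term0: "C (\<lambda>\<omega>. (X \<omega>, Y \<omega>, Z \<omega>) = (X \<omega>0, Y \<omega>0, Z \<omega>0)) / real (card \<Omega>) /
        ((C (\<lambda>\<omega>. (X \<omega>, Z \<omega>) = (X \<omega>0, Z \<omega>0)) / real (card \<Omega>)) *
          ((C (\<lambda>\<omega>. (Y \<omega>, Z \<omega>) = (Y \<omega>0, Z \<omega>0)) / real (card \<Omega>)) / (C (\<lambda>\<omega>. Z \<omega> = Z \<omega>0) / real (card \<Omega>)))) = 1"
    if w0: "\<omega>0 \<in> \<Omega>" for \<omega>0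
  proof -
    let ?a = "X \<omega>0" and ?b = "Y \<omega>0" and ?c = "Z \<omega>0"
    let ?T = "{\<omega>\<in>\<Omega>. Z \<omega> = ?c}"
    have Zb: "\<And>\<omega>. \<omega>\<in>\<Omega> \<Longrightarrow> Y \<omega> = ?b \<Longrightarrow> Z \<omega> = ?c" using Zf w0 by blast
    have e1: "C (\<lambda>\<omega>. (X \<omega>, Y \<omega>, Z \<omega>) = (?a, ?b, ?c)) = C (\<lambda>\<omega>. X \<omega> = ?a \<and> Y \<omega> = ?b)"
      unfolding C_def by (rule arg_cong[where f="\<lambda>S. real (card S)"]) (use Zb w0 in blast)
    have e2: "C (\<lambda>\<omega>. (Y \<omega>, Z \<omega>) = (?b, ?c)) = C (\<lambda>\<omega>. Y \<omega> = ?b)"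
      unfolding C_def by (rule arg_cong[where f="\<lambda>S. real (card S)"]) (use Zb w0 in blast)
    have fib: "{\<omega>\<in>?T. Y \<omega> = b} = {\<omega>\<in>\<Omega>. Y \<omega> = b}" if "b \<in> Y ` ?T" for b
    proof -
      from that obtain \<omega>1 where o1: "\<omega>1 \<in> \<Omega>" "Z \<omega>1 = ?c" "b = Y \<omega>1" by blast
      have z: "Z \<omega> = ?c" if "\<omega>\<in>\<Omega>" "Y \<omega> = b" for \<omega>
        using Zf[OF that(1) o1(1)] that(2) o1(2,3) by simp
      show ?thesis using z by blast
    qed
    have cnt: "C P = (\<Sum>\<omega>\<in>\<Omega>. if P \<omega> then 1 else 0)" for P
      unfolding C_def using fin by (simp add: sum.inter_filter[symmetric])
    have "C (\<lambda>\<omega>. (X \<omega>, Z \<omega>) = (?a, ?c)) = (\<Sum>\<omega>\<in>?T. if X \<omega> = ?a then 1 else 0)"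
      unfolding cnt using fin by (simp add: sum.inter_filter) (intro sum.cong, auto)
    also have "\<dots> = (\<Sum>b\<in>Y`?T. \<Sum>\<omega>\<in>{\<omega>\<in>?T. Y \<omega> = b}. if X \<omega> = ?a then 1 else 0)"
      using fin by (intro sum.group[symmetric]) auto
    also have "\<dots> = (\<Sum>b\<in>Y`?T. h ?a ?c * (\<Sum>\<omega>\<in>{\<omega>\<in>?T. Y \<omega> = b}. 1))"
    proof (rule sum.cong[OF refl])
      fix b assume b: "b \<in> Y ` ?T"
      then obtain \<omega>1 where w1: "\<omega>1 \<in> \<Omega>" "Z \<omega>1 = ?c" "b = Y \<omega>1" by auto
      have "(\<Sum>\<omega>\<in>{\<omega>\<in>?T. Y \<omega> = b}. if X \<omega> = ?a then 1 else 0) = real (card {\<omega>'\<in>\<Omega>. X \<omega>' = ?a \<and> Y \<omega>' = Y \<omega>1})"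
        unfolding fib[OF b] using fin w1 by (simp add: sum.inter_filter[symmetric]) (metis (no_types, lifting) Collect_cong)
      also have "\<dots> = h ?a ?c * real (card {\<omega>'\<in>\<Omega>. Y \<omega>' = Y \<omega>1})"
        using H[OF w1(1)] w1 by simp
      also have "\<dots> = h ?a ?c * (\<Sum>\<omega>\<in>{\<omega>\<in>?T. Y \<omega> = b}. 1)"
        using fib[OF b] w1(3) by simp
      finally show "(\<Sum>\<omega>\<in>{\<omega>\<in>?T. Y \<omega> = b}. if X \<omega> = ?a then 1 else 0) = h ?a ?c * (\<Sum>\<omega>\<in>{\<omega>\<in>?T. Y \<omega> = b}. 1)" .
    qed
    also have "\<dots> = h ?a ?c * (\<Sum>b\<in>Y`?T. \<Sum>\<omega>\<in>{\<omega>\<in>?T. Y \<omega> = b}. 1)"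
      by (simp add: sum_distrib_left)
    also have "\<dots> = h ?a ?c * (\<Sum>\<omega>\<in>?T. 1)"
      using fin by (subst sum.group) auto
    also have "\<dots> = h ?a ?c * C (\<lambda>\<omega>. Z \<omega> = ?c)" unfolding C_def by simp
    finally have e3: "C (\<lambda>\<omega>. (X \<omega>, Z \<omega>) = (?a, ?c)) = h ?a ?c * C (\<lambda>\<omega>. Z \<omega> = ?c)" .
    have e4: "C (\<lambda>\<omega>. X \<omega> = ?a \<and> Y \<omega> = ?b) = h ?a ?c * C (\<lambda>\<omega>. Y \<omega> = ?b)"
      unfolding C_def using H[OF w0] by simp
    have pos: "C (\<lambda>\<omega>. X \<omega> = ?a \<and> Y \<omega> = ?b) > 0" "C (\<lambda>\<omega>. Y \<omega> = ?b) > 0" "C (\<lambda>\<omega>. Z \<omega> = ?c) > 0"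
      unfolding C_def using fin w0 by (auto simp: card_gt_0_iff)
    have cpos: "real (card \<Omega>) > 0" using fin ne by (simp add: card_gt_0_iff)
    have hpos: "h ?a ?c \<noteq> 0" using pos(1) e4 by auto
    have alg: "\<And>hh cy cz nn :: real. hh \<noteq> 0 \<Longrightarrow> cy > 0 \<Longrightarrow> cz > 0 \<Longrightarrow> nn > 0 \<Longrightarrow>
        hh * cy / nn / (hh * cz / nn * (cy / nn / (cz / nn))) = 1"
      by (simp add: field_simps)
    show ?thesis unfolding e1 e2 e3 e4 by (rule alg[OF hpos pos(2) pos(3) cpos])
  qed
  show ?thesis
    unfolding eq
  proof (rule sum.neutral, rule ballI)
    fix t assume "t \<in> (\<lambda>x. (X x, Y x, Z x)) ` \<Omega>"
    then obtain \<omega> where w: "\<omega> \<in> \<Omega>" and t: "t = (X \<omega>, Y \<omega>, Z \<omega>)" by blast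
    show "(case t of (x, y, z) \<Rightarrow>
            C (\<lambda>\<omega>. (X \<omega>, Y \<omega>, Z \<omega>) = (x, y, z)) / real (card \<Omega>) *
            log 2
             (C (\<lambda>\<omega>. (X \<omega>, Y \<omega>, Z \<omega>) = (x, y, z)) / real (card \<Omega>) /
              (C (\<lambda>\<omega>. (X \<omega>, Z \<omega>) = (x, z)) / real (card \<Omega>) *
               (C (\<lambda>\<omega>. (Y \<omega>, Z \<omega>) = (y, z)) / real (card \<Omega>) /
                (C (\<lambda>\<omega>. Z \<omega> = z) / real (card \<Omega>)))))) = 0"
      unfolding t prod.case term0[OF w] by simp
  qed
qed


definition W0 :: "nat \<Rightarrow> nat \<Rightarrow> (nat \<Rightarrow> int) set" where
  "W0 m n = {1..<n} \<rightarrow>\<^sub>E {0..<2^m}"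
definition Y0 :: "nat \<Rightarrow> nat \<Rightarrow> int" where
  "Y0 n = (\<lambda>i\<in>{1..n}. 0)"
definition phi :: "nat \<Rightarrow> nat \<Rightarrow> (nat \<Rightarrow> int) \<Rightarrow> (nat \<Rightarrow> int) \<Rightarrow> (nat \<Rightarrow> int) \<Rightarrow> nat \<Rightarrow> int" where
  "phi m n x y w = (\<lambda>i\<in>{1..<n}. (w i + x i * y i) mod 2^m)"
definition psi :: "nat \<Rightarrow> nat \<Rightarrow> (nat \<Rightarrow> int) \<Rightarrow> (nat \<Rightarrow> int) \<Rightarrow> (nat \<Rightarrow> int) \<Rightarrow> nat \<Rightarrow> int" where
  "psi m n x y w = (\<lambda>i\<in>{1..<n}. (w i - x i * y i) mod 2^m)"

lemma key_mod:
  fixes N s t x y :: int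
  assumes "N > 0" and "(s + x*y) mod N = t mod N"
  shows "((4* s - 2*y - 1) mod (4*N) + (2*x+1)*(2*y+1)) mod (4*N)
       = ((4* t - 2*0 - 1) mod (4*N) + (2*x+1)*(2*0+1)) mod (4*N)"
proof -
  have l: "((4* s - 2*y - 1) mod (4*N) + (2*x+1)*(2*y+1)) mod (4*N) = (4*(s + x*y) + 2*x) mod (4*N)"
    unfolding mod_add_left_eq by (rule arg_cong[where f="\<lambda>z. z mod (4*N)"]) (simp add: algebra_simps)
  have r: "((4* t - 2*0 - 1) mod (4*N) + (2*x+1)*(2*0+1)) mod (4*N) = (4* t + 2*x) mod (4*N)"
    unfolding mod_add_left_eq by (rule arg_cong[where f="\<lambda>z. z mod (4*N)"]) (simp add: algebra_simps)
  have "(4*(s + x*y)) mod (4*N) = (4* t) mod (4*N)"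
    using assms(2) by (metis mult_mod_right)
  hence "(4*(s + x*y) + 2*x) mod (4*N) = (4* t + 2*x) mod (4*N)"
    by (rule mod_add_cong) simp
  thus ?thesis using l r by simp
qed

lemma share_last:
  fixes v S :: int
  shows "((4 * v - 4 * S) mod 2^(m+2)) div 4 = (v - S) mod 2^m"
proof -
  have "(4 * v - 4 * S) mod 2^(m+2) = 4 * ((v - S) mod 2^m)"
    by (simp add: power_add mult_mod_right algebra_simps)
  thus ?thesis by simp
qed

lemma share_last':
  fixes v S :: int
  shows "((4 * v - 4 * S) mod (4 * 2^m)) div 4 = (v - S) mod 2^m"
  using share_last[of v S m] by (simp add: power_add mult.commute)

lemma msgs_shift:
  assumes n: "n \<ge> 1"
  shows "sp_msgs m n x (y, v, w) = sp_msgs m n x (Y0 n, ((\<Sum>i=1..n. x i * y i) + v) mod 2^m, phi m n x y w)"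
proof -
  let ?N = "(2::int)^m"
  have D: "(2::int)^(m+2) = 4 * ?N" by (simp add: power_add)
  have Npos: "?N > 0" by simp
  have pt: "((4 * sp_share m n (y, v, w) i - 2 * y i - 1) mod 2^(m+2) + (2 * x i + 1) * (2 * y i + 1)) mod 2^(m+2)
      = ((4 * sp_share m n (Y0 n, ((\<Sum>i=1..n. x i * y i) + v) mod 2^m, phi m n x y w) i - 2 * Y0 n i - 1) mod 2^(m+2)
           + (2 * x i + 1) * (2 * Y0 n i + 1)) mod 2^(m+2)"
    if i: "i \<in> {1..n}" for i
  proof -
    have y0: "Y0 n i = 0" using i by (simp add: Y0_def)
    have cong: "(sp_share m n (y, v, w) i + x i * y i) mod ?N
        = sp_share m n (Y0 n, ((\<Sum>i=1..n. x i * y i) + v) mod 2^m, phi m n x y w) i mod ?N"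
    proof (cases "i < n")
      case True
      then show ?thesis using i by (simp add: sp_share_def phi_def)
    next
      case False
      then have "i = n" using i by auto
      let ?Sw = "\<Sum>j\<in>{1..<n}. w j"
      let ?Sxy = "\<Sum>j\<in>{1..<n}. x j * y j"
      have s1: "sp_share m n (y, v, w) i = (v - ?Sw) mod ?N"
        using False by (simp add: sp_share_def share_last share_last')
      have sphi: "(\<Sum>j\<in>{1..<n}. phi m n x y w j) mod ?N = (?Sw + ?Sxy) mod ?N"
      proof -
        have "(\<Sum>j\<in>{1..<n}. phi m n x y w j) = (\<Sum>j\<in>{1..<n}. (w j + x j * y j) mod ?N)"
          by (rule sum.cong) (auto simp: phi_def)
        also have "\<dots> mod ?N = (\<Sum>j\<in>{1..<n}. (w j + x j * y j)) mod ?N"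
          by (rule mod_sum_eq)
        finally show ?thesis by (simp add: sum.distrib)
      qed
      have tot: "(\<Sum>i=1..n. x i * y i) = ?Sxy + x n * y n"
      proof -
        have "{1..n} = {1..<Suc n}" by auto
        thus ?thesis using n by (simp add: sum.atLeastLessThan_Suc)
      qed
      let ?c = "((\<Sum>i=1..n. x i * y i) + v) mod ?N"
      have s2: "sp_share m n (Y0 n, ?c, phi m n x y w) i = (?c - (\<Sum>j\<in>{1..<n}. phi m n x y w j)) mod ?N"
        using False by (simp add: sp_share_def share_last share_last')
      have "(sp_share m n (y, v, w) i + x i * y i) mod ?N = (v - ?Sw + x n * y n) mod ?N"
        using s1 \<open>i = n\<close> by (simp add: mod_add_left_eq)
      also have "\<dots> = (((\<Sum>i=1..n. x i * y i) + v) - (?Sw + ?Sxy)) mod ?N"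
        unfolding tot by (simp add: algebra_simps)
      also have "\<dots> = (((\<Sum>i=1..n. x i * y i) + v) mod ?N - (?Sw + ?Sxy) mod ?N) mod ?N"
        by (rule mod_diff_eq[symmetric])
      also have "\<dots> = (?c - (\<Sum>j\<in>{1..<n}. phi m n x y w j) mod ?N) mod ?N"
        by (simp only: sphi)
      also have "\<dots> = (?c - (\<Sum>j\<in>{1..<n}. phi m n x y w j)) mod ?N"
        by (rule mod_diff_right_eq)
      also have "\<dots> = sp_share m n (Y0 n, ?c, phi m n x y w) i mod ?N"
        unfolding s2 by simp
      finally show ?thesis .
    qed
    show ?thesis unfolding D y0 by (rule key_mod[OF Npos cong])
  qed
  show ?thesis
    unfolding sp_msgs_def prod.case by (rule restrict_ext) (rule pt)
qed

lemma phi_W: "w \<in> W0 m n \<Longrightarrow> phi m n x y w \<in> W0 m n"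
  unfolding W0_def phi_def by (rule restrict_PiE_iff[THEN iffD2]) (simp add: pos_mod_bound)

lemma psi_W: "w \<in> W0 m n \<Longrightarrow> psi m n x y w \<in> W0 m n"
  unfolding W0_def psi_def by (rule restrict_PiE_iff[THEN iffD2]) (simp add: pos_mod_bound)

lemma psi_phi:
  assumes w: "w \<in> W0 m n"
  shows "psi m n x y (phi m n x y w) = w"
proof (rule ext)
  fix i
  show "psi m n x y (phi m n x y w) i = w i"
  proof (cases "i \<in> {1..<n}")
    case True
    then have "w i \<in> {0..<2^m}" using w unfolding W0_def by (rule PiE_mem[rotated])
    then have "w i mod 2^m = w i" by simp
    then show ?thesis using True unfolding psi_def phi_def by (simp add: mod_diff_left_eq)
  next
    case False
    then have "w i = undefined" using w unfolding W0_def by (rule PiE_arb[rotated])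
    then show ?thesis using False unfolding psi_def phi_def by auto
  qed
qed

lemma phi_psi:
  assumes w: "w \<in> W0 m n"
  shows "phi m n x y (psi m n x y w) = w"
proof (rule ext)
  fix i
  show "phi m n x y (psi m n x y w) i = w i"
  proof (cases "i \<in> {1..<n}")
    case True
    then have "w i \<in> {0..<2^m}" using w unfolding W0_def by (rule PiE_mem[rotated])
    then have "w i mod 2^m = w i" by simp
    then show ?thesis using True unfolding psi_def phi_def by (simp add: mod_add_left_eq)
  next
    case False
    then have "w i = undefined" using w unfolding W0_def by (rule PiE_arb[rotated])
    then show ?thesis using False unfolding psi_def phi_def by auto
  qed
qed

lemma card_shift:
  "card {w\<in>W0 m n. P (phi m n x y w)} = card {w\<in>W0 m n. P w}"
proof -
  have inj: "inj_on (phi m n x y) {w\<in>W0 m n. P (phi m n x y w)}"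
    by (rule inj_on_inverseI[where g="psi m n x y"]) (simp add: psi_phi)
  have img: "phi m n x y ` {w\<in>W0 m n. P (phi m n x y w)} = {w\<in>W0 m n. P w}"
  proof
    show "phi m n x y ` {w\<in>W0 m n. P (phi m n x y w)} \<subseteq> {w\<in>W0 m n. P w}"
      using phi_W by blast
  next
    show "{w\<in>W0 m n. P w} \<subseteq> phi m n x y ` {w\<in>W0 m n. P (phi m n x y w)}"
    proof
      fix w assume "w \<in> {w\<in>W0 m n. P w}"
      then have w: "w \<in> W0 m n" "P w" by auto
      have ps: "psi m n x y w \<in> {w\<in>W0 m n. P (phi m n x y w)}"
        using psi_W[OF w(1)] phi_psi[OF w(1)] w(2) by simp
      show "w \<in> phi m n x y ` {w\<in>W0 m n. P (phi m n x y w)}"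
        by (rule image_eqI[where x="psi m n x y w"]) (simp_all add: phi_psi[OF w(1)] ps del: mem_Collect_eq)
    qed
  qed
  show ?thesis using card_image[OF inj] unfolding img by (rule sym)
qed

lemma fiber:
  assumes "(y, v, w0) \<in> sp_space m n"
  shows "{\<omega>'\<in>sp_space m n. P \<omega>' \<and> sp_bob \<omega>' = (y, v)} = (\<lambda>w. (y, v, w)) ` {w\<in>W0 m n. P (y, v, w)}"
proof (intro set_eqI iffI)
  fix \<omega> assume a: "\<omega> \<in> {\<omega>'\<in>sp_space m n. P \<omega>' \<and> sp_bob \<omega>' = (y, v)}"
  obtain y' v' w' where o: "\<omega> = (y', v', w')" by (cases \<omega>) blast
  from a have "y' = y" "v' = v" unfolding o sp_bob_def by auto
  with a o have "\<omega> = (y, v, w')" "w' \<in> W0 m n" "P (y, v, w')"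
    unfolding sp_space_def W0_def by auto
  then show "\<omega> \<in> (\<lambda>w. (y, v, w)) ` {w\<in>W0 m n. P (y, v, w)}" by blast
next
  fix \<omega> assume "\<omega> \<in> (\<lambda>w. (y, v, w)) ` {w\<in>W0 m n. P (y, v, w)}"
  then obtain w' where "\<omega> = (y, v, w')" "w' \<in> W0 m n" "P (y, v, w')" by blast
  then show "\<omega> \<in> {\<omega>'\<in>sp_space m n. P \<omega>' \<and> sp_bob \<omega>' = (y, v)}"
    using assms unfolding sp_space_def W0_def sp_bob_def by simp
qed

lemma card_fiber:
  assumes "(y, v, w0) \<in> sp_space m n"
  shows "card {\<omega>'\<in>sp_space m n. P \<omega>' \<and> sp_bob \<omega>' = (y, v)} = card {w\<in>W0 m n. P (y, v, w)}"
  unfolding fiber[OF assms] by (rule card_image) (auto simp: inj_on_def)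


theorem lemma4:
  fixes m n :: nat and x :: "nat \<Rightarrow> int"
  assumes "m \<ge> 1" and "n \<ge> 1"
    and "\<forall>i\<in>{1..n}. x i \<in> {0..<2^m}"
  shows "prob_space.conditional_mutual_information (uniform_count_measure (sp_space m n)) 2
           (count_space (sp_msgs m n x ` sp_space m n))
           (count_space (sp_bob ` sp_space m n))
           (count_space (sp_out m n x ` sp_space m n))
           (sp_msgs m n x) sp_bob (sp_out m n x) = 0"
proof (rule cmi_zero_gen[where h="\<lambda>a c. real (card {w\<in>W0 m n. sp_msgs m n x (Y0 n, c, w) = a}) / real (card (W0 m n))"])
  show fin: "finite (sp_space m n)"
    unfolding sp_space_def by (intro finite_cartesian_product finite_PiE) auto
  have "((\<lambda>i\<in>{1..n}. 0), 0, (\<lambda>i\<in>{1..<n}. 0)) \<in> sp_space m n"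
    unfolding sp_space_def by simp
  then show "sp_space m n \<noteq> {}" by blast
  show "sp_out m n x \<omega> = sp_out m n x \<omega>'" if "sp_bob \<omega> = sp_bob \<omega>'" for \<omega> \<omega>'
    using that by (cases \<omega>; cases \<omega>') (simp add: sp_bob_def sp_out_def)
  have finW: "finite (W0 m n)" unfolding W0_def by (intro finite_PiE) auto
  have "(\<lambda>i\<in>{1..<n}. 0) \<in> W0 m n" unfolding W0_def by simp
  then have cW: "real (card (W0 m n)) > 0" using finW by (auto simp: card_gt_0_iff)
  fix a \<omega> assume om: "\<omega> \<in> sp_space m n"
  obtain y v w0 where o: "\<omega> = (y, v, w0)" by (cases \<omega>) blast
  have om': "(y, v, w0) \<in> sp_space m n" using om o by simp
  let ?c = "((\<Sum>i=1..n. x i * y i) + v) mod 2^m"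
  have bob: "sp_bob \<omega> = (y, v)" unfolding o sp_bob_def by simp
  have out: "sp_out m n x \<omega> = ?c" unfolding o sp_out_def by simp
  have "card {\<omega>'\<in>sp_space m n. sp_msgs m n x \<omega>' = a \<and> sp_bob \<omega>' = (y, v)}
      = card {w\<in>W0 m n. sp_msgs m n x (y, v, w) = a}"
    by (rule card_fiber[OF om'])
  also have "\<dots> = card {w\<in>W0 m n. sp_msgs m n x (Y0 n, ?c, phi m n x y w) = a}"
    using msgs_shift[OF assms(2), of m x y v] by simp
  also have "\<dots> = card {w\<in>W0 m n. sp_msgs m n x (Y0 n, ?c, w) = a}"
    by (rule card_shift)
  finally have e1: "card {\<omega>'\<in>sp_space m n. sp_msgs m n x \<omega>' = a \<and> sp_bob \<omega>' = (y, v)}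
      = card {w\<in>W0 m n. sp_msgs m n x (Y0 n, ?c, w) = a}" .
  have e2: "card {\<omega>'\<in>sp_space m n. sp_bob \<omega>' = (y, v)} = card (W0 m n)"
    using card_fiber[OF om', of "\<lambda>_. True"] by simp
  show "real (card {\<omega>'\<in>sp_space m n. sp_msgs m n x \<omega>' = a \<and> sp_bob \<omega>' = sp_bob \<omega>}) =
         real (card {w\<in>W0 m n. sp_msgs m n x (Y0 n, sp_out m n x \<omega>, w) = a}) / real (card (W0 m n)) *
         real (card {\<omega>'\<in>sp_space m n. sp_bob \<omega>' = sp_bob \<omega>})"
    unfolding bob out e1 e2 using cW by simp
qed

end
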